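(* Let $\mathbb{F}$ be an algebraically closed field with $\mathrm{char}\,\mathbb{F}=2$ and $n\ge2$. Let $\underline{a}=(e_1,e_2,0,\ldots,0)\in\mathbb{M}^n$ and let $\underline{b}\in\mathbb{M}^n$ be such that $\dim\mathrm{alg}(\underline{b})\le2$ and $f(\underline{a})=f(\underline{b})$ for all $f\in S_n^{(2)}$. Then ${\rm G}_2\underline{a}={\rm G}_2\underline{b}$.
   Context: The split octonion algebra $\mathbf{O}$ is the 8-dimensional $\mathbb{F}$-vector space of formal matrices $a=\begin{pmatrix}\alpha&\mathbf{u}\\ \mathbf{v}&\beta\end{pmatrix}$ with $\alpha,\beta\in\mathbb{F}$, $\mathbf{u},\mathbf{v}\in\mathbb{F}^3$, with multiplication $\begin{pmatrix}\alpha&\mathbf{u}\\ \mathbf{v}&\beta\end{pmatrix}\begin{pmatrix}\alpha'&\mathbf{u}'\\ \mathbf{v}'&\beta'\end{pmatrix}=\begin{pmatrix}\alpha\alpha'+\mathbf{u}\cdot\mathbf{v}'&\alpha\mathbf{u}'+\beta'\mathbf{u}-\mathbf{v}\times\mathbf{v}'\\ \alpha'\mathbf{v}+\beta\mathbf{v}'+\mathbf{u}\times\mathbf{u}'&\beta\beta'+\mathbf{v}\cdot\mathbf{u}'\end{pmatrix}$ (dot product and cross product on $\mathbb{F}^3$). Trace $\mathrm{tr}(a)=\alpha+\beta$, norm $n(a)=\alpha\beta-\mathbf{u}\cdot\mathbf{v}$. $e_1$ has $\alpha=1$ and all else $0$, $e_2$ has $\beta=1$ and all else $0$. $\mathbb{M}=\left\{\begin{pmatrix}\alpha&(\gamma,0,0)\\(\delta,0,0)&\beta\end{pmatrix}\right\}\subseteq\mathbf{O}$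 is the quaternion subalgebra. ${\rm G}_2=\mathrm{Aut}(\mathbf{O})$ acts diagonally on $\mathbf{O}^n$. For $\underline{b}\in\mathbf{O}^n$, $\mathrm{alg}(\underline{b})$ is the (non-unital) $\mathbb{F}$-subalgebra of $\mathbf{O}$ generated by $b_1,\ldots,b_n$. $S_n^{(2)}$ is the set of functions on $\mathbf{O}^n$: $\underline{a}\mapsto n(a_i)$, $\underline{a}\mapsto\mathrm{tr}(a_i)$ ($1\le i\le n$), and $\underline{a}\mapsto\mathrm{tr}(a_ia_j)$ ($1\le i<j\le n$). *)

theory Defs
  imports "HOL-Computational_Algebra.Polynomial"
begin

text \<open>Split octonions over a field: the formal matrix with entries
  alpha, u = (u1,u2,u3), v = (v1,v2,v3), beta.\<close>

datatype 'a oct = Oct (oal: 'a) (ou1: 'a) (ou2: 'a) (ou3: 'a)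
                      (ov1: 'a) (ov2: 'a) (ov3: 'a) (obe: 'a)

instantiation oct :: (ab_group_add) ab_group_add
begin
definition "0 = Oct 0 0 0 0 0 0 0 0"
definition "x + y = Oct (oal x + oal y) (ou1 x + ou1 y) (ou2 x + ou2 y) (ou3 x + ou3 y)
                        (ov1 x + ov1 y) (ov2 x + ov2 y) (ov3 x + ov3 y) (obe x + obe y)"
definition "- x = Oct (- oal x) (- ou1 x) (- ou2 x) (- ou3 x)
                      (- ov1 x) (- ov2 x) (- ov3 x) (- obe x)"
definition "x - y = Oct (oal x - oal y) (ou1 x - ou1 y) (ou2 x - ou2 y) (ou3 x - ou3 y)
                        (ov1 x - ov1 y) (ov2 x - ov2 y) (ov3 x - ov3 y) (obe x - obe y)"
instance
  by standard (auto simp: zero_oct_def plus_oct_def uminus_oct_def minus_oct_def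
                          algebra_simps intro: oct.expand)
end

text \<open>Multiplication of split octonions (dot and cross product on F^3).\<close>

instantiation oct :: (comm_ring) times
begin
definition "x * y = Oct
   (oal x * oal y + (ou1 x * ov1 y + ou2 x * ov2 y + ou3 x * ov3 y))
   (oal x * ou1 y + obe y * ou1 x - (ov2 x * ov3 y - ov3 x * ov2 y))
   (oal x * ou2 y + obe y * ou2 x - (ov3 x * ov1 y - ov1 x * ov3 y))
   (oal x * ou3 y + obe y * ou3 x - (ov1 x * ov2 y - ov2 x * ov1 y))
   (oal y * ov1 x + obe x * ov1 y + (ou2 x * ou3 y - ou3 x * ou2 y))
   (oal y * ov2 x + obe x * ov2 y + (ou3 x * ou1 y - ou1 x * ou3 y))
   (oal y * ov3 x + obe x * ov3 y + (ou1 x * ou2 y - ou2 x * ou1 y))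
   (obe x * obe y + (ov1 x * ou1 y + ov2 x * ou2 y + ov3 x * ou3 y))"
instance ..
end

definition oct_scale :: "'a::field \<Rightarrow> 'a oct \<Rightarrow> 'a oct" where
  "oct_scale c x = Oct (c * oal x) (c * ou1 x) (c * ou2 x) (c * ou3 x)
                       (c * ov1 x) (c * ov2 x) (c * ov3 x) (c * obe x)"

global_interpretation oct: vector_space "oct_scale :: 'a::field \<Rightarrow> 'a oct \<Rightarrow> 'a oct"
  by standard (auto simp: oct_scale_def plus_oct_def algebra_simps intro: oct.expand)

definition oct_tr :: "'a::comm_ring oct \<Rightarrow> 'a" where
  "oct_tr x = oal x + obe x"
definition oct_n :: "'a::comm_ring oct \<Rightarrow> 'a" where
  "oct_n x = oal x * obe x - (ou1 x * ov1 x + ou2 x * ov2 x + ou3 x * ov3 x)"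

definition oct_e1 :: "'a::comm_ring_1 oct" where "oct_e1 = Oct 1 0 0 0 0 0 0 0"
definition oct_e2 :: "'a::comm_ring_1 oct" where "oct_e2 = Oct 0 0 0 0 0 0 0 1"

definition oct_M :: "'a::comm_ring oct set" where
  "oct_M = {x. ou2 x = 0 \<and> ou3 x = 0 \<and> ov2 x = 0 \<and> ov3 x = 0}"

definition G2 :: "('a::field oct \<Rightarrow> 'a oct) set" where
  "G2 = {g. bij g \<and> Vector_Spaces.linear oct_scale oct_scale g
            \<and> (\<forall>x y. g (x * y) = g x * g y)}"

definition oct_alg :: "'a::field oct set \<Rightarrow> 'a oct set" where
  "oct_alg S = \<Inter>{A. oct.subspace A \<and> (\<forall>x\<in>A. \<forall>y\<in>A. x * y \<in> A) \<and> S \<subseteq> A}"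

text \<open>Equality of the invariants in S_n^(2) for n-tuples indexed by 0..<n.\<close>
definition S2_equal :: "nat \<Rightarrow> (nat \<Rightarrow> 'a::comm_ring oct) \<Rightarrow> (nat \<Rightarrow> 'a oct) \<Rightarrow> bool" where
  "S2_equal n a b \<longleftrightarrow>
     (\<forall>i<n. oct_n (a i) = oct_n (b i) \<and> oct_tr (a i) = oct_tr (b i)) \<and>
     (\<forall>i j. i < j \<and> j < n \<longrightarrow> oct_tr (a i * a j) = oct_tr (b i * b j))"

definition same_G2_orbit :: "nat \<Rightarrow> (nat \<Rightarrow> 'a::field oct) \<Rightarrow> (nat \<Rightarrow> 'a oct) \<Rightarrow> bool" where
  "same_G2_orbit n a b \<longleftrightarrow> (\<exists>g\<in>G2. \<forall>i<n. g (a i) = b i)"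

end

theory Submission
  imports Defs
begin


definition Pm :: "'a::field \<Rightarrow> 'a \<Rightarrow> 'a \<Rightarrow> 'a \<Rightarrow> 'a oct \<Rightarrow> 'a oct" where
 "Pm p11 p12 p21 p22 x = Oct
   ((p11 * oal x + p12 * ov1 x) * p22 - (p11 * ou1 x + p12 * obe x) * p21)
   ((p11 * ou1 x + p12 * obe x) * p11 - (p11 * oal x + p12 * ov1 x) * p12)
   ((p11 * ou2 x + p12 * ou3 x) * p22 - (p11 * ov3 x - p12 * ov2 x) * p21)
   ((p21 * ou2 x + p22 * ou3 x) * p22 - (p21 * ov3 x - p22 * ov2 x) * p21)
   ((p21 * oal x + p22 * ov1 x) * p22 - (p21 * ou1 x + p22 * obe x) * p21)
   (- ((p21 * ov3 x - p22 * ov2 x) * p11 - (p21 * ou2 x + p22 * ou3 x) * p12))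
   ((p11 * ov3 x - p12 * ov2 x) * p11 - (p11 * ou2 x + p12 * ou3 x) * p12)
   ((p21 * ou1 x + p22 * obe x) * p11 - (p21 * oal x + p22 * ov1 x) * p12)"

lemma Pm_mult:
  "oct_scale (p11*p22 - p12*p21) (Pm p11 p12 p21 p22 (x * y)) = Pm p11 p12 p21 p22 x * Pm p11 p12 p21 p22 y"
  by (rule oct.expand) (simp_all add: Pm_def oct_scale_def times_oct_def algebra_simps)

lemma Pm_inv:
  "Pm p22 (-p12) (-p21) p11 (Pm p11 p12 p21 p22 x) = oct_scale ((p11*p22 - p12*p21)^2) x"
  by (rule oct.expand) (simp_all add: Pm_def oct_scale_def power2_eq_square algebra_simps)

lemma Pm_add: "Pm p11 p12 p21 p22 (x + y) = Pm p11 p12 p21 p22 x + Pm p11 p12 p21 p22 y"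
  by (rule oct.expand) (simp_all add: Pm_def plus_oct_def algebra_simps)

lemma Pm_scale: "Pm p11 p12 p21 p22 (oct_scale c x) = oct_scale c (Pm p11 p12 p21 p22 x)"
  by (rule oct.expand) (simp_all add: Pm_def oct_scale_def algebra_simps)

lemma Pm_G2:
  assumes "p11*p22 - p12*p21 = 1"
  shows "Pm p11 p12 p21 p22 \<in> G2"
proof -
  have m: "Pm p11 p12 p21 p22 (x * y) = Pm p11 p12 p21 p22 x * Pm p11 p12 p21 p22 y" for x y
    using Pm_mult[of p11 p22 p12 p21 x y] assms by (simp add: oct.scale_one)
  have i1: "Pm p22 (-p12) (-p21) p11 (Pm p11 p12 p21 p22 x) = x" for x
    using Pm_inv[of p22 p12 p21 p11 x] assms by (simp add: oct.scale_one)
  have i2: "Pm p11 p12 p21 p22 (Pm p22 (-p12) (-p21) p11 x) = x" for x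
    using Pm_inv[of p11 "-p12" "-p21" p22 x] assms by (simp add: oct.scale_one mult.commute)
  have b: "bij (Pm p11 p12 p21 p22)"
    by (rule o_bij[of "Pm p22 (-p12) (-p21) p11"]) (auto simp: i1 i2)
  have l: "Vector_Spaces.linear oct_scale oct_scale (Pm p11 p12 p21 p22)"
    unfolding Vector_Spaces.linear_iff using oct.vector_space_axioms by (simp add: Pm_add Pm_scale)
  show ?thesis using m b l by (simp add: G2_def)
qed



definition oct_one :: "'a::comm_ring_1 oct" where "oct_one = Oct 1 0 0 0 0 0 0 1"

lemma mult_add_right: "(x::'a::field oct) * (y + z) = x * y + x * z"
  by (rule oct.expand) (simp_all add: times_oct_def plus_oct_def algebra_simps)
lemma mult_add_left: "((y::'a::field oct) + z) * x = y * x + z * x"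
  by (rule oct.expand) (simp_all add: times_oct_def plus_oct_def algebra_simps)
lemma mult_scale_right: "(x::'a::field oct) * oct_scale c y = oct_scale c (x * y)"
  by (rule oct.expand) (simp_all add: times_oct_def oct_scale_def algebra_simps)
lemma mult_scale_left: "oct_scale c (x::'a::field oct) * y = oct_scale c (x * y)"
  by (rule oct.expand) (simp_all add: times_oct_def oct_scale_def algebra_simps)
lemma tr_add: "oct_tr ((x::'a::field oct) + y) = oct_tr x + oct_tr y"
  by (simp add: oct_tr_def plus_oct_def)
lemma tr_scale: "oct_tr (oct_scale c (x::'a::field oct)) = c * oct_tr x"
  by (simp add: oct_tr_def oct_scale_def algebra_simps)
lemma tr_comm: "oct_tr ((x::'a::field oct) * y) = oct_tr (y * x)"
  by (simp add: oct_tr_def times_oct_def algebra_simps)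
lemma M_assoc: "x \<in> oct_M \<Longrightarrow> y \<in> oct_M \<Longrightarrow> z \<in> oct_M \<Longrightarrow> ((x::'a::field oct) * y) * z = x * (y * z)"
  by (rule oct.expand) (simp_all add: oct_M_def times_oct_def algebra_simps)
lemma sq: "(x::'a::field oct) * x = oct_scale (oct_tr x) x - oct_scale (oct_n x) oct_one"
  by (rule oct.expand) (simp_all add: oct_tr_def oct_n_def oct_one_def oct_scale_def minus_oct_def times_oct_def algebra_simps)
lemma n_add: "oct_n ((x::'a::field oct) + y) = oct_n x + oct_n y + oct_tr x * oct_tr y - oct_tr (x * y)"
  by (simp add: oct_tr_def oct_n_def plus_oct_def times_oct_def algebra_simps)

lemma idem:
  assumes "oct_n (p::'a::field oct) = 0" "oct_tr p = 1"
  shows "p * p = p"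
  using sq[of p] assms by (simp add: oct.scale_one)

lemma keyC:
  fixes p q :: "'a::field oct"
  assumes two: "2 = (0::'a)" and M: "p \<in> oct_M" "q \<in> oct_M"
    and np: "oct_n p = 0" "oct_tr p = 1" and nq: "oct_n q = 0" "oct_tr q = 1"
    and t: "oct_tr (p*q) = 0" and pq: "p \<noteq> q"
    and w: "p*q = oct_scale x p + oct_scale y q"
  shows "p*q = 0"
proof -
  have pp: "p*p = p" using idem np by blast
  have qq: "q*q = q" using idem nq by blast
  have "x + y = 0" using t w np nq by (simp add: tr_add tr_scale)
  then have yx: "y = x"
  proof -
    have "x + x = 0" using two by (metis mult_2 mult_zero_left)
    then show ?thesis using \<open>x + y = 0\<close> by (metis add_left_cancel)
  qed
  have E1: "p*q = oct_scale x p + oct_scale x (p*q)"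
  proof -
    have "p*(p*q) = p*q" using M_assoc[OF M(1) M(1) M(2)] pp by simp
    moreover have "p*(p*q) = oct_scale x p + oct_scale y (p*q)"
      by (subst w) (simp add: mult_add_right mult_scale_right pp)
    ultimately show ?thesis using yx by simp
  qed
  have E2: "p*q = oct_scale x (p*q) + oct_scale x q"
  proof -
    have "(p*q)*q = p*q" using M_assoc[OF M(1) M(2) M(2)] qq by simp
    moreover have "(p*q)*q = oct_scale x (p*q) + oct_scale y q"
      by (subst w) (simp add: mult_add_left mult_scale_left qq)
    ultimately show ?thesis using yx by simp
  qed
  have "oct_scale x p = oct_scale x q" using E1 E2 by (metis add.commute add_left_cancel)
  then have "oct_scale x (p - q) = 0" by (simp add: oct.scale_right_diff_distrib)
  then have "x = 0" using pq by simp
  then show ?thesis using w yx by simp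
qed

lemma neg_one: "2 = (0::'a::field) \<Longrightarrow> - oct_one = (oct_one :: 'a oct)"
  apply (rule oct.expand)
  by (simp_all add: oct_one_def uminus_oct_def)

lemma keyD:
  fixes p q :: "'a::field oct"
  assumes two: "2 = (0::'a)"
    and np: "oct_n p = 0" "oct_tr p = 1" and nq: "oct_n q = 0" "oct_tr q = 1"
    and t: "oct_tr (p*q) = 0" and pq: "p*q = 0" and qp: "q*p = 0"
  shows "q = oct_one - p"
proof -
  have "(p+q)*(p+q) = p + q"
    using idem[OF np] idem[OF nq] pq qp by (simp add: mult_add_left mult_add_right)
  moreover have "(p+q)*(p+q) = - oct_one"
    using sq[of "p+q"] np nq t two by (simp add: tr_add n_add oct.scale_one)
  ultimately have "p + q = oct_one" using neg_one[OF two] by simp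
  then show ?thesis by (metis add_diff_cancel_left')
qed

lemma keyE:
  fixes p q r :: "'a::field oct"
  assumes "oct_tr p = 1" "oct_tr q = 1" "p*p = p" "oct_tr (p*q) = 0"
    and "oct_tr r = 0" "oct_tr (p*r) = 0"
    and r: "r = oct_scale s p + oct_scale t q"
  shows "r = 0"
proof -
  have "s + t = 0" using assms by (simp add: tr_add tr_scale)
  moreover have "s = 0" using assms by (simp add: tr_add tr_scale mult_add_right mult_scale_right)
  ultimately show ?thesis using r by simp
qed



definition E8 :: "'a::field oct set" where
  "E8 = {Oct 1 0 0 0 0 0 0 0, Oct 0 1 0 0 0 0 0 0, Oct 0 0 1 0 0 0 0 0, Oct 0 0 0 1 0 0 0 0,
         Oct 0 0 0 0 1 0 0 0, Oct 0 0 0 0 0 1 0 0, Oct 0 0 0 0 0 0 1 0, Oct 0 0 0 0 0 0 0 1}"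

lemma E8_span: "(x::'a::field oct) \<in> oct.span E8"
proof -
  have e: "x = oct_scale (oal x) (Oct 1 0 0 0 0 0 0 0) + oct_scale (ou1 x) (Oct 0 1 0 0 0 0 0 0)
    + oct_scale (ou2 x) (Oct 0 0 1 0 0 0 0 0) + oct_scale (ou3 x) (Oct 0 0 0 1 0 0 0 0)
    + oct_scale (ov1 x) (Oct 0 0 0 0 1 0 0 0) + oct_scale (ov2 x) (Oct 0 0 0 0 0 1 0 0)
    + oct_scale (ov3 x) (Oct 0 0 0 0 0 0 1 0) + oct_scale (obe x) (Oct 0 0 0 0 0 0 0 1)"
    by (rule oct.expand) (simp_all add: oct_scale_def plus_oct_def)
  show ?thesis
    by (subst e) (intro oct.span_add oct.span_scale oct.span_base; simp add: E8_def)
qed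

lemma span2:
  fixes A :: "'a::field oct set"
  assumes "p \<in> A" "q \<in> A" "oct.independent {p,q}" "p \<noteq> q" "oct.dim A \<le> 2"
  shows "A \<subseteq> oct.span {p,q}"
proof
  fix x assume xA: "x \<in> A"
  obtain B where B: "B \<subseteq> A" "oct.independent B" "A \<subseteq> oct.span B" "card B = oct.dim A"
    using oct.basis_exists by blast
  have fE: "finite (E8 :: 'a oct set)" by (simp add: E8_def)
  have fB: "finite B" using oct.independent_span_bound[OF fE B(2)] E8_span by blast
  show "x \<in> oct.span {p,q}"
  proof (rule ccontr)
    assume nx: "x \<notin> oct.span {p,q}"
    have xn: "x \<notin> {p,q}" using nx oct.span_base by blast
    have ind: "oct.independent (insert x {p,q})"
      using nx assms(3) xn by (simp add: oct.independent_insert[of x])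
    have "insert x {p,q} \<subseteq> oct.span B" using xA assms(1,2) B(3) by blast
    then have "card (insert x {p,q}) \<le> card B"
      using oct.independent_span_bound[OF fB ind] by blast
    moreover have "x \<notin> {p,q}" using nx oct.span_base by blast
    ultimately show False using assms(4,5) B(4) by simp
  qed
qed

lemma span2_elim:
  assumes "x \<in> oct.span {p,q}"
  obtains s t where "x = oct_scale s p + oct_scale t (q::'a::field oct)"
proof -
  from assms obtain k where "x - oct_scale k p \<in> oct.span {q}"
    using oct.span_breakdown_eq by blast
  then obtain t where "x - oct_scale k p = oct_scale t q" by (auto simp: oct.span_singleton)
  then have "x = oct_scale k p + oct_scale t q" by (metis diff_add_cancel add.commute)
  then show ?thesis using that by blast
qed

lemma alg_sub: "S \<subseteq> oct_alg S"
  unfolding oct_alg_def by blast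
lemma alg_mult: "x \<in> oct_alg S \<Longrightarrow> y \<in> oct_alg S \<Longrightarrow> x * y \<in> oct_alg S"
  unfolding oct_alg_def by blast



lemma indep2:
  fixes p q :: "'a::field oct"
  assumes "oct_tr p = 1" "oct_tr q = 1" "p \<noteq> q"
  shows "oct.independent {p,q}"
proof -
  have q0: "q \<noteq> 0" using assms(2) by (auto simp: oct_tr_def zero_oct_def)
  have iq: "oct.independent {q}"
    using q0 by (simp add: oct.independent_insert[of q])
  have "p \<notin> oct.span {q}"
  proof
    assume "p \<in> oct.span {q}"
    then obtain k where k: "p = oct_scale k q" by (auto simp: oct.span_singleton)
    then have "k = 1" using assms by (simp add: tr_scale)
    then show False using k assms(3) by (simp add: oct.scale_one)
  qed
  then show ?thesis using iq assms(3) by (simp add: oct.independent_insert[of p])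
qed

lemma Pm_one: "Pm p11 p12 p21 p22 oct_one = oct_scale (p11*p22 - p12*p21) oct_one"
  by (rule oct.expand) (simp_all add: Pm_def oct_scale_def oct_one_def algebra_simps)

lemma Pm_zero: "Pm p11 p12 p21 p22 0 = 0"
  by (rule oct.expand) (simp_all add: Pm_def zero_oct_def)

lemma e12: "oct_e1 + oct_e2 = (oct_one :: 'a::field oct)"
  by (rule oct.expand) (simp_all add: oct_e1_def oct_e2_def oct_one_def plus_oct_def)

lemma exists_g:
  fixes p :: "'a::field oct"
  assumes M: "p \<in> oct_M" and np: "oct_n p = 0" "oct_tr p = 1"
  shows "\<exists>g\<in>G2. g oct_e1 = p \<and> g oct_e2 = oct_one - p \<and> g 0 = 0"
proof -
  have c: "ou2 p = 0" "ou3 p = 0" "ov2 p = 0" "ov3 p = 0" using M by (auto simp: oct_M_def)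
  have s: "oal p + obe p = 1" using np by (simp add: oct_tr_def)
  have d: "oal p * obe p = ou1 p * ov1 p" using np c by (simp add: oct_n_def)
  have main: "\<exists>g\<in>G2. g oct_e1 = p \<and> g oct_one = oct_one \<and> g 0 = 0"
  proof (cases "oal p = 0")
    case True
    then have b1: "obe p = 1" using s by simp
    have gd: "ou1 p * ov1 p = 0" using d True by simp
    let ?g = "Pm (ou1 p) (-1) 1 (ov1 p)"
    have det: "ou1 p * ov1 p - (-1) * 1 = 1" using gd by simp
    have "?g oct_e1 = p"
      by (rule oct.expand) (simp_all add: Pm_def oct_e1_def c True b1 gd)
    moreover have "?g oct_one = oct_one" by (metis Pm_one det oct.scale_one)
    ultimately show ?thesis using Pm_G2[OF det] Pm_zero by blast
  next
    case False
    let ?a = "oal p"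
    let ?g = "Pm 1 (- ou1 p) (ov1 p / ?a) ?a"
    have det: "1 * ?a - (- ou1 p) * (ov1 p / ?a) = 1"
    proof -
      have "1 * ?a - (- ou1 p) * (ov1 p / ?a) = (?a * ?a + ou1 p * ov1 p) / ?a"
        using False by (simp add: field_simps)
      also have "\<dots> = (?a * (oal p + obe p)) / ?a" using d by (simp add: algebra_simps)
      also have "\<dots> = 1" using s False by simp
      finally show ?thesis .
    qed
    have bb: "ou1 p * ov1 p / ?a = obe p" using d False by (simp add: field_simps)
    have "?g oct_e1 = p"
      by (rule oct.expand) (simp_all add: Pm_def oct_e1_def c False bb, simp add: field_simps False bb[symmetric])
    moreover have "?g oct_one = oct_one" by (metis Pm_one det oct.scale_one)
    ultimately show ?thesis using Pm_G2[OF det] Pm_zero by blast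
  qed
  then obtain g where g: "g \<in> G2" "g oct_e1 = p" "g oct_one = oct_one" "g 0 = 0" by blast
  have lin: "Vector_Spaces.linear oct_scale oct_scale g" using g(1) by (simp add: G2_def)
  have "g oct_one = g oct_e1 + g oct_e2" 
    using e12 lin unfolding Vector_Spaces.linear_iff by metis
  then have "g oct_e2 = oct_one - p" using g by (metis add_diff_cancel_left')
  then show ?thesis using g by blast
qed



theorem lemma7p7:
  fixes a b :: "nat \<Rightarrow> 'a::alg_closed_field oct" and n :: nat
  assumes "CHAR('a) = 2"
    and "n \<ge> 2"
    and "a 0 = oct_e1" and "a 1 = oct_e2" and "\<forall>i. 2 \<le> i \<and> i < n \<longrightarrow> a i = 0"
    and "\<forall>i<n. b i \<in> oct_M"
    and "oct.dim (oct_alg {b i | i. i < n}) \<le> 2"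
    and "S2_equal n a b"
  shows "same_G2_orbit n a b"
proof -
  have two: "2 = (0::'a)" using of_nat_CHAR[where 'a='a] assms(1) by simp
  define p where "p = b 0"
  define q where "q = b 1"
  have n01: "0 < n" "1 < n" using assms(2) by auto
  have Mp: "p \<in> oct_M" and Mq: "q \<in> oct_M" using assms(6) n01 by (auto simp: p_def q_def)
  have S: "\<forall>i<n. oct_n (a i) = oct_n (b i) \<and> oct_tr (a i) = oct_tr (b i)"
    "\<forall>i j. i < j \<and> j < n \<longrightarrow> oct_tr (a i * a j) = oct_tr (b i * b j)"
    using assms(8) by (auto simp: S2_equal_def)
  have np: "oct_n p = 0" "oct_tr p = 1"
    using S(1) n01 assms(3) by (auto simp: p_def oct_n_def oct_tr_def oct_e1_def)
  have nq: "oct_n q = 0" "oct_tr q = 1"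
    using S(1) n01 assms(4) by (auto simp: q_def oct_n_def oct_tr_def oct_e2_def)
  have tpq: "oct_tr (p*q) = 0"
    using S(2)[rule_format, of 0 1] n01 assms(3,4)
    by (simp add: p_def q_def oct_tr_def oct_e1_def oct_e2_def times_oct_def)
  have tqp: "oct_tr (q*p) = 0" using tpq tr_comm by metis
  have pp: "p*p = p" using idem np by blast
  have pq: "p \<noteq> q"
  proof
    assume "p = q" then have "oct_tr (p*q) = 1" using pp np by simp
    then show False using tpq by simp
  qed
  define A where "A = oct_alg {b i | i. i < n}"
  have bA: "b i \<in> A" if "i < n" for i using alg_sub[of "{b i | i. i < n}"] that by (auto simp: A_def)
  have pA: "p \<in> A" and qA: "q \<in> A" using bA n01 by (auto simp: p_def q_def)
  have Asp: "A \<subseteq> oct.span {p,q}"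
    using span2[OF pA qA indep2[OF np(2) nq(2) pq] pq] assms(7) by (simp add: A_def)
  have pq0: "p*q = 0"
  proof -
    have "p*q \<in> A" using alg_mult pA qA unfolding A_def by blast
    then have "p*q \<in> oct.span {p,q}" using Asp by blast
    then obtain s t where "p*q = oct_scale s p + oct_scale t q"
      using span2_elim by blast
    then show ?thesis using keyC[OF two Mp Mq np nq tpq pq] by blast
  qed
  have qp0: "q*p = 0"
  proof -
    have "q*p \<in> A" using alg_mult pA qA unfolding A_def by blast
    then have "q*p \<in> oct.span {q,p}" using Asp by (simp add: insert_commute subset_iff)
    then obtain s t where "q*p = oct_scale s q + oct_scale t p"
      using span2_elim by blast
    moreover have "q \<noteq> p" using pq by simp
    ultimately show ?thesis using keyC[OF two Mq Mp nq np tqp] by blast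
  qed
  have qeq: "q = oct_one - p" using keyD[OF two np nq tpq pq0 qp0] .
  have bi0: "b i = 0" if ii: "2 \<le> i" "i < n" for i
  proof -
    obtain s t where st: "b i = oct_scale s p + oct_scale t q"
      using span2_elim Asp bA[OF ii(2)] by blast
    have ai: "a i = 0" using assms(5) ii by blast
    have "oct_tr (b i) = 0" using S(1) ii ai by (auto simp: oct_tr_def zero_oct_def)
    moreover have "oct_tr (p * b i) = 0"
      using S(2)[rule_format, of 0 i] ii ai assms(3)
      by (simp add: p_def oct_tr_def oct_e1_def zero_oct_def times_oct_def)
    ultimately show ?thesis using keyE[OF np(2) nq(2) pp tpq _ _ st] by blast
  qed
  obtain g where g: "g \<in> G2" "g oct_e1 = p" "g oct_e2 = oct_one - p" "g 0 = 0"
    using exists_g[OF Mp np] by blast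
  have "\<forall>i<n. g (a i) = b i"
  proof (intro allI impI)
    fix i assume i: "i < n"
    consider "i = 0" | "i = 1" | "2 \<le> i" by linarith
    then show "g (a i) = b i"
    proof cases
      case 1 then show ?thesis using g assms(3) p_def by simp
    next
      case 2 then show ?thesis using g assms(4) q_def qeq by simp
    next
      case 3 then show ?thesis using g assms(5) bi0 i by simp
    qed
  qed
  then show ?thesis using g(1) by (auto simp: same_G2_orbit_def)
qed

end
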